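(* Let $A_0(z)$ be the unique function holomorphic near $z=0$ with $A_0(0)=0$ and $z(1+A_0(z))^3=A_0(z)$, define $A_k(z)$, $k\ge1$, by the recurrence below, and define $A_k[n]$ by $A_k(z)=(-1)^k\sum_{n\ge1}A_k[n]z^n$. Then for every $k=0,1,2,\dots$, the sequence $n\mapsto A_k[n]$ is monotonically increasing.
   Context: With $\delta_z=z\frac{d}{dz}$, for $k\ge0$: $$A_{k+1}=\frac{1+A_0}{2A_0-1}\Bigl(\delta_z^2A_k+\sum_{i+j=k}\bigl(A_i\delta_z^2A_j-\delta_zA_i\,\delta_zA_j\bigr)-3z\!\!\sum_{\substack{i+j=k+1\\ i,j\le k}}\!\!A_iA_j-z\!\!\!\sum_{\substack{j_1+j_2+j_3=k+1\\ j_1,j_2,j_3\le k}}\!\!\!A_{j_1}A_{j_2}A_{j_3}\Bigr),$$ all indices nonnegative. Equivalently, $(A_k)$ is the unique sequence of functions holomorphic in $|z|<4/27$ such that $\sum_kA_k(z)a^{-2k}$ formally solves $a^2(z(1+A)^3-A)=(1+A)\delta_z^2A-(\delta_zA)^2$. *)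

theory Defs
  imports "HOL-Computational_Algebra.Formal_Power_Series"
begin

text \<open>The functions A_k(z), holomorphic in |z| < 4/27, are represented by their
Taylor expansions at 0, i.e. as formal power series with real coefficients.\<close>

definition euler_op :: "real fps \<Rightarrow> real fps" where
  "euler_op f = fps_X * fps_deriv f"

definition A0 :: "real fps" where
  "A0 = (THE A. fps_nth A 0 = 0 \<and> fps_X * (1 + A) ^ 3 = A)"

definition A_step :: "(nat \<Rightarrow> real fps) \<Rightarrow> nat \<Rightarrow> real fps" where
  "A_step Aprev k =
     (1 + A0) / (2 * A0 - 1) *
     ( euler_op (euler_op (Aprev k))
     + (\<Sum>i\<le>k. Aprev i * euler_op (euler_op (Aprev (k - i)))
                - euler_op (Aprev i) * euler_op (Aprev (k - i)))
     - 3 * fps_X * (\<Sum>i\<in>{1..k}. Aprev i * Aprev (k + 1 - i))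
     - fps_X * (\<Sum>(j1, j2, j3) \<in> {(j1, j2, j3). j1 + j2 + j3 = k + 1 \<and> j1 \<le> k \<and> j2 \<le> k \<and> j3 \<le> k}.
                   Aprev j1 * Aprev j2 * Aprev j3))"

fun A_list :: "nat \<Rightarrow> real fps list" where
  "A_list 0 = [A0]"
| "A_list (Suc k) = A_list k @ [A_step (\<lambda>i. A_list k ! i) k]"

definition A :: "nat \<Rightarrow> real fps" where
  "A k = A_list k ! k"

definition Acoeff :: "nat \<Rightarrow> nat \<Rightarrow> real" where
  "Acoeff k n = (-1) ^ k * fps_nth (A k) n"

end

theory Submission
  imports Defs
begin
unbundle fps_syntax

definition nn :: "real fps \<Rightarrow> bool" where "nn f \<longleftrightarrow> (\<forall>n. 0 \<le> f $ n)"
definition MM :: "real fps \<Rightarrow> bool" where "MM f \<longleftrightarrow> nn ((1 - fps_X) * f)"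

lemma q_nth: "((1 - fps_X) * (f::real fps)) $ n = (if n = 0 then f $ 0 else f $ n - f $ (n - 1))"
proof -
  have "(1 - fps_X) * f = f - fps_X * f" by (simp add: left_diff_distrib)
  then show ?thesis by (simp add: fps_X_mult_nth)
qed

lemma MM_nn: assumes "MM f" shows "nn f"
proof -
  have "0 \<le> f $ n" for n
  proof (induction n)
    case 0 then show ?case using assms q_nth[of f 0] unfolding MM_def nn_def by metis
  next
    case (Suc n) then show ?case using assms q_nth[of f "Suc n"] unfolding MM_def nn_def
      by (metis diff_Suc_1 diff_ge_0_iff_ge nat.distinct(1) order_trans)
  qed
  then show ?thesis unfolding nn_def by blast
qed

lemma MM_mono: assumes "MM f" shows "f $ n \<le> f $ Suc n"
  using assms q_nth[of f "Suc n"] unfolding MM_def nn_def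
  by (metis diff_Suc_1 diff_ge_0_iff_ge nat.distinct(1))

lemma nn_add: "nn f \<Longrightarrow> nn g \<Longrightarrow> nn (f + g)" by (simp add: nn_def)
lemma nn_mult: "nn f \<Longrightarrow> nn g \<Longrightarrow> nn (f * g)"
  unfolding nn_def fps_mult_nth by (auto intro!: sum_nonneg)
lemma nn_sum: "(\<And>i. i \<in> S \<Longrightarrow> nn (f i)) \<Longrightarrow> nn (sum f S)"
  unfolding nn_def fps_sum_nth by (auto intro!: sum_nonneg)
lemma nn_X: "nn fps_X" by (simp add: nn_def fps_X_def)
lemma nn_1: "nn 1" by (simp add: nn_def)
lemma nn_numeral: "nn (numeral k)" by (simp add: nn_def fps_numeral_nth)
lemma nn_const: "0 \<le> c \<Longrightarrow> nn (fps_const c)" by (simp add: nn_def)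

lemma MM_add: "MM f \<Longrightarrow> MM g \<Longrightarrow> MM (f + g)" unfolding MM_def by (simp add: distrib_left nn_add)
lemma MM_mult: "MM f \<Longrightarrow> nn g \<Longrightarrow> MM (f * g)" unfolding MM_def
  by (metis mult.assoc nn_mult)
lemma MM_mult': "MM f \<Longrightarrow> nn g \<Longrightarrow> MM (g * f)" by (metis MM_mult mult.commute)
lemma MM_sum: "(\<And>i. i \<in> S \<Longrightarrow> MM (f i)) \<Longrightarrow> MM (sum f S)"
  unfolding MM_def by (simp add: sum_distrib_left nn_sum)

lemma euler_nth: "euler_op f $ n = of_nat n * f $ n"
  by (cases n) (simp_all add: euler_op_def)

lemma MM_EE: assumes "MM f" shows "MM (euler_op (euler_op f))"
proof -
  have "0 \<le> ((1 - fps_X) * euler_op (euler_op f)) $ n" for n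
  proof (cases n)
    case 0 then show ?thesis by (simp add: q_nth euler_nth)
  next
    case (Suc m)
    have a: "f $ m \<le> f $ Suc m" "0 \<le> f $ m" using MM_mono[OF assms] MM_nn[OF assms] by (auto simp: nn_def)
    have "real m * (real m * f $ m) \<le> real (Suc m) * (real (Suc m) * f $ Suc m)"
      using a by (intro mult_mono) (auto intro!: mult_mono)
    then show ?thesis using Suc by (simp add: q_nth euler_nth)
  qed
  then show ?thesis unfolding MM_def nn_def by blast
qed

lemma nn_inverse: assumes "nn g" "g $ 0 = 0" shows "nn (inverse (1 - g))"
proof -
  define h where "h = inverse (1 - g)"
  have "h * (1 - g) = 1" unfolding h_def using assms by (intro inverse_mult_eq_1) auto
  then have h: "h = 1 + g * h" by (simp add: algebra_simps)
  have "0 \<le> h $ n" for n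
  proof (induction n rule: less_induct)
    case (less n)
    have "0 \<le> (g * h) $ n" unfolding fps_mult_nth
    proof (intro sum_nonneg)
      fix i assume "i \<in> {0..n}"
      then show "0 \<le> g $ i * h $ (n - i)"
        using assms less by (cases i) (auto simp: nn_def)
    qed
    moreover have "h $ n = 1 $ n + (g * h) $ n" by (subst h) simp
    ultimately show ?case by simp
  qed
  then show ?thesis unfolding nn_def h_def by blast
qed

lemma inv_q: "inverse (1 - fps_X :: real fps) = Abs_fps (\<lambda>n. 1)"
  by (metis fps_inverse_gp' fps_inverse_idempotent fps_nth_Abs_fps one_neq_zero)

lemma nn_invq: "nn (inverse (1 - fps_X))" by (simp add: inv_q nn_def)

abbreviation E where "E \<equiv> euler_op"

lemma E_add: "E (f + g) = E f + E g" by (simp add: euler_op_def algebra_simps)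
lemma E_diff: "E (f - g) = E f - E g" by (simp add: euler_op_def algebra_simps)
lemma E_mult: "E (f * g) = E f * g + f * E g" by (simp add: euler_op_def algebra_simps)
lemma E_const: "E (fps_const c * f) = fps_const c * E f" by (simp add: euler_op_def algebra_simps)
lemma E_X: "E fps_X = fps_X" by (simp add: euler_op_def)
lemma E_1: "E 1 = 0" by (simp add: euler_op_def)
lemma E_uminus: "E (- f) = - E f" by (simp add: euler_op_def)
lemma E_q: "E (1 - fps_X) = - fps_X" by (simp add: euler_op_def)

definition BB :: "real fps \<Rightarrow> real fps \<Rightarrow> real fps" where
  "BB f g = f * E (E g) + E (E f) * g - E f * E g - E f * E g"

lemma BB_q: "BB ((1 - fps_X) * f) ((1 - fps_X) * g) = (1 - fps_X)^2 * BB f g - 2 * fps_X * f * g"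
proof -
  let ?q = "1 - fps_X :: real fps"
  have e1: "E (?q * h) = - fps_X * h + ?q * E h" for h by (simp add: E_mult E_q)
  have e2: "E (E (?q * h)) = - fps_X * h - 2 * fps_X * E h + ?q * E (E h)" for h
    unfolding e1 E_add E_mult E_q E_uminus E_X by (simp add: algebra_simps)
  show ?thesis unfolding BB_def e2 unfolding e1 by (simp add: algebra_simps power2_eq_square)
qed

lemma nn_BB: assumes "nn f" "nn g" shows "nn (BB f g)"
proof -
  have "0 \<le> BB f g $ n" for n
  proof -
    have "BB f g $ n = (\<Sum>i=0..n. f$i * (real (n-i) * (real (n-i) * g$(n-i))))
        + (\<Sum>i=0..n. real i * (real i * f$i) * g$(n-i))
        - (\<Sum>i=0..n. real i * f$i * (real (n-i) * g$(n-i)))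
        - (\<Sum>i=0..n. real i * f$i * (real (n-i) * g$(n-i)))"
      unfolding BB_def fps_sub_nth fps_add_nth fps_mult_nth euler_nth by simp
    also have "\<dots> = (\<Sum>i=0..n. f$i * g$(n-i) * (real (n - i) - real i)^2)"
      unfolding sum.distrib[symmetric] sum_subtractf[symmetric]
      by (intro sum.cong refl) (simp add: power2_diff algebra_simps power2_eq_square)
    also have "\<dots> \<ge> 0" using assms by (auto simp: nn_def intro!: sum_nonneg)
    finally show ?thesis by simp
  qed
  then show ?thesis by (simp add: nn_def)
qed

lemma MM_BB: assumes "MM f" "MM g" shows "MM (BB f g)"
proof -
  let ?q = "1 - fps_X :: real fps"
  have iq: "inverse ?q * ?q = 1" by (intro inverse_mult_eq_1) auto
  have "?q * BB f g = inverse ?q * (?q^2 * BB f g)" 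
    by (metis (no_types, lifting) iq mult.assoc mult.left_neutral power2_eq_square)
  also have "\<dots> = inverse ?q * (BB (?q * f) (?q * g) + 2 * fps_X * f * g)" by (simp add: BB_q)
  finally have eq: "?q * BB f g = inverse ?q * (BB (?q * f) (?q * g) + 2 * fps_X * f * g)" .
  have b: "nn (BB (?q * f) (?q * g))" using assms unfolding MM_def by (rule nn_BB)
  have "nn (inverse ?q * (BB (?q * f) (?q * g) + 2 * fps_X * f * g))"
    using b MM_nn[OF assms(1)] MM_nn[OF assms(2)]
    by (intro nn_mult nn_add nn_invq nn_numeral nn_X) 
  then show ?thesis unfolding MM_def eq .
qed

lemma mult_trunc:
  assumes "\<forall>j\<le>n. a$j = b$j" "\<forall>j\<le>n. c$j = (d::real fps)$j"
  shows "(a*c)$n = (b*d)$n"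
  unfolding fps_mult_nth using assms by (intro sum.cong) auto

lemma cube_trunc:
  assumes "\<forall>j\<le>n. a$j = (b::real fps)$j"
  shows "((1+a)^3)$n = ((1+b)^3)$n"
proof -
  have 1: "\<forall>j\<le>n. (1+a)$j = (1+b)$j" using assms by simp
  have 2: "\<forall>j\<le>n. ((1+a)*(1+a))$j = ((1+b)*(1+b))$j"
    using 1 by (auto intro!: mult_trunc)
  show ?thesis unfolding power3_eq_cube using mult_trunc[OF 2 1] .
qed

lemma A0_unique:
  assumes "a$0 = 0" "fps_X * (1 + a)^3 = a" "b$0 = 0" "fps_X * (1 + b)^3 = (b::real fps)"
  shows "a = b"
proof -
  have "\<forall>j\<le>n. a$j = b$j" for n
  proof (induction n)
    case 0 then show ?case using assms by simp
  next
    case (Suc n)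
    have "a $ Suc n = ((1+a)^3)$n" by (subst assms(2)[symmetric]) simp
    also have "\<dots> = ((1+b)^3)$n" using Suc by (rule cube_trunc)
    also have "\<dots> = b $ Suc n" by (subst (2) assms(4)[symmetric]) simp
    finally show ?case using Suc le_Suc_eq by auto
  qed
  then show ?thesis by (auto simp: fps_eq_iff)
qed

lemma A0_exists: "\<exists>a::real fps. a$0 = 0 \<and> fps_X * (1 + a)^3 = a"
proof -
  define g :: "real fps" where "g = fps_X * inverse ((1 + fps_X)^3)"
  define u where "u = fps_inv g"
  have g0: "g$0 = 0" by (simp add: g_def)
  have g1: "g$1 = 1" by (simp add: g_def fps_nth_power_0)
  have u0: "u$0 = 0" by (simp add: u_def fps_inv_def)
  have "g oo u = fps_X" unfolding u_def using g0 g1 by (intro fps_inv_right) auto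
  moreover have "g oo u = u * inverse ((1+u)^3)"
  proof -
    have "g oo u = (fps_X oo u) * (inverse ((1 + fps_X)^3) oo u)"
      unfolding g_def using u0 by (rule fps_compose_mult_distrib)
    also have "inverse ((1 + fps_X)^3) oo u = inverse ((1 + fps_X)^3 oo u)"
      using u0 by (intro fps_inverse_compose) auto
    also have "(1 + fps_X)^3 oo u = (1+u)^3"
      using u0 by (simp add: fps_compose_power[symmetric] fps_compose_add_distrib)
    finally show ?thesis using u0 by simp
  qed
  ultimately have e: "u * inverse ((1+u)^3) = fps_X" by simp
  have "inverse ((1+u)^3) * (1+u)^3 = 1" using u0 by (intro inverse_mult_eq_1) auto
  then have "fps_X * (1+u)^3 = u" unfolding e[symmetric] by (metis mult.assoc mult.right_neutral)
  then show ?thesis using u0 by blast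
qed

lemma A0_prop: "A0$0 = 0 \<and> fps_X * (1 + A0)^3 = A0"
proof -
  have "\<exists>!a::real fps. a$0 = 0 \<and> fps_X * (1 + a)^3 = a"
    using A0_exists A0_unique by blast
  then show ?thesis unfolding A0_def by (rule theI')
qed

lemma numeral_mult_nth: "(numeral k * f :: real fps) $ n = numeral k * f $ n"
  by (simp add: fps_mult_nth fps_numeral_nth sum.atLeast_Suc_atMost)

lemma nn_upto:
  assumes "\<forall>j\<le>n. 0 \<le> a$j" "\<forall>j\<le>n. 0 \<le> (b::real fps)$j"
  shows "0 \<le> (a*b)$n"
  unfolding fps_mult_nth using assms by (intro sum_nonneg) auto

lemma nn_A0: "nn A0"
proof -
  have "\<forall>j\<le>n. 0 \<le> A0$j" for n
  proof (induction n)
    case 0 then show ?case using A0_prop by simp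
  next
    case (Suc n)
    have 1: "\<forall>j\<le>n. 0 \<le> (1+A0)$j" using Suc by simp
    have 2: "\<forall>j\<le>n. 0 \<le> ((1+A0)*(1+A0))$j" using 1 by (auto intro!: nn_upto)
    have "A0 $ Suc n = ((1+A0)^3)$n" by (subst (1) A0_prop[THEN conjunct2, symmetric]) simp
    also have "\<dots> \<ge> 0" unfolding power3_eq_cube using nn_upto[OF 2 1] .
    finally show ?case using Suc le_Suc_eq by auto
  qed
  then show ?thesis unfolding nn_def by blast
qed

lemma MM_A0: "MM A0"
proof -
  have "0 \<le> ((1 - fps_X) * A0) $ n" for n
  proof (cases n)
    case 0 then show ?thesis using A0_prop by (simp add: q_nth)
  next
    case (Suc m)
    have "A0 $ Suc m = ((1+A0)^3)$m" by (subst (1) A0_prop[THEN conjunct2, symmetric]) simp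
    also have "(1+A0)^3 = 1 + 3 * A0 + 3 * A0^2 + A0^3" by (simp add: power3_eq_cube power2_eq_square algebra_simps)
    finally have "A0 $ Suc m = 1 $ m + 3 * A0 $ m + 3 * (A0^2) $ m + (A0^3) $ m"
      by (simp add: numeral_mult_nth)
    moreover have "0 \<le> (1::real fps) $ m" "0 \<le> A0 $ m" "0 \<le> (A0^2) $ m" "0 \<le> (A0^3) $ m"
      using nn_A0 nn_1 nn_mult[OF nn_A0 nn_A0] nn_mult[OF nn_mult[OF nn_A0 nn_A0] nn_A0]
      by (auto simp: nn_def power2_eq_square power3_eq_cube)
    ultimately show ?thesis using Suc by (simp add: q_nth)
  qed
  then show ?thesis unfolding MM_def nn_def by blast
qed

lemma nn_pref: "nn ((1 + A0) * inverse (1 - 2 * A0))"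
proof -
  have a: "nn (2 * A0)" by (intro nn_mult nn_numeral nn_A0)
  have b: "(2 * A0) $ 0 = 0" using A0_prop by (simp add: numeral_mult_nth)
  show ?thesis by (intro nn_mult nn_add nn_1 nn_A0 nn_inverse a b)
qed

lemma len_A_list: "length (A_list k) = Suc k"
  by (induction k) auto

lemma A_list_prefix: "i \<le> k \<Longrightarrow> A_list (k + d) ! i = A_list k ! i"
proof (induction d)
  case 0 then show ?case by simp
next
  case (Suc d)
  have "i < length (A_list (k + d))" using Suc.prems len_A_list by simp
  then show ?case using Suc by (simp add: nth_append)
qed

lemma A_list_nth: "i \<le> k \<Longrightarrow> A_list k ! i = A i"
  unfolding A_def by (metis A_list_prefix le_add_diff_inverse order_refl)

lemma A_step_cong: "(\<And>i. i \<le> k \<Longrightarrow> f i = g i) \<Longrightarrow> A_step f k = A_step g k"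
  unfolding A_step_def
  apply (intro arg_cong2[where f="(*)"] arg_cong2[where f="(-)"] arg_cong2[where f="(+)"] refl
      arg_cong[where f="\<lambda>x. E (E x)"] sum.cong)
        apply (auto split: prod.splits)
  done

lemma A_Suc: "A (Suc k) = A_step A k"
proof -
  have "A (Suc k) = A_step (\<lambda>i. A_list k ! i) k"
    unfolding A_def using len_A_list[of k] by (simp add: nth_append)
  also have "\<dots> = A_step A k" by (rule A_step_cong) (simp add: A_list_nth)
  finally show ?thesis .
qed

definition sg :: "nat \<Rightarrow> real fps" where "sg j = fps_const ((-1) ^ j)"
definition cc :: "nat \<Rightarrow> real fps" where "cc j = sg j * A j"

definition Trip :: "nat \<Rightarrow> (nat \<times> nat \<times> nat) set" where
  "Trip k = {(j1, j2, j3). j1 + j2 + j3 = k + 1 \<and> j1 \<le> k \<and> j2 \<le> k \<and> j3 \<le> k}"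

lemma sg_mult: "sg a * sg b = sg (a + b)" by (simp add: sg_def power_add)
lemma sg_Suc: "sg (Suc k) = - sg k" by (simp add: sg_def)
lemma E_sg: "E (sg j * f) = sg j * E f" by (simp add: sg_def E_const)

definition W :: "nat \<Rightarrow> real fps" where
  "W k = E (E (cc k))
     + (\<Sum>i\<le>k. cc i * E (E (cc (k - i))) - E (cc i) * E (cc (k - i)))
     + 3 * fps_X * (\<Sum>i\<in>{1..k}. cc i * cc (k + 1 - i))
     + fps_X * (\<Sum>(j1, j2, j3) \<in> Trip k. cc j1 * cc j2 * cc j3)"

lemma sgT: "sg k * ( E (E (A k))
     + (\<Sum>i\<le>k. A i * E (E (A (k - i))) - E (A i) * E (A (k - i)))
     - 3 * fps_X * (\<Sum>i\<in>{1..k}. A i * A (k + 1 - i))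
     - fps_X * (\<Sum>(j1, j2, j3) \<in> Trip k. A j1 * A j2 * A j3)) = W k"
proof -
  have 1: "sg k * E (E (A k)) = E (E (cc k))" by (simp add: cc_def E_sg)
  have 2: "sg k * (\<Sum>i\<le>k. A i * E (E (A (k - i))) - E (A i) * E (A (k - i)))
     = (\<Sum>i\<le>k. cc i * E (E (cc (k - i))) - E (cc i) * E (cc (k - i)))"
    unfolding sum_distrib_left
  proof (intro sum.cong refl)
    fix i assume "i \<in> {..k}"
    then have s: "sg i * sg (k - i) = sg k" by (simp add: sg_mult)
    have "cc i * E (E (cc (k - i))) - E (cc i) * E (cc (k - i))
        = (sg i * sg (k - i)) * (A i * E (E (A (k - i))) - E (A i) * E (A (k - i)))"
      unfolding cc_def E_sg by (simp add: algebra_simps)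
    then show "sg k * (A i * E (E (A (k - i))) - E (A i) * E (A (k - i))) =
         cc i * E (E (cc (k - i))) - E (cc i) * E (cc (k - i))" by (simp add: s)
  qed
  have 3: "- (sg k * (\<Sum>i\<in>{1..k}. A i * A (k + 1 - i))) = (\<Sum>i\<in>{1..k}. cc i * cc (k + 1 - i))"
    unfolding sum_distrib_left sum_negf[symmetric]
  proof (intro sum.cong refl)
    fix i assume "i \<in> {1..k}"
    then have s: "sg i * sg (k + 1 - i) = - sg k" by (simp add: sg_mult sg_Suc)
    have "cc i * cc (k + 1 - i) = (sg i * sg (k + 1 - i)) * (A i * A (k + 1 - i))"
      by (simp add: cc_def algebra_simps)
    then show "- (sg k * (A i * A (k + 1 - i))) = cc i * cc (k + 1 - i)" using s by (metis minus_mult_left)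
  qed
  have 4: "- (sg k * (\<Sum>(j1, j2, j3) \<in> Trip k. A j1 * A j2 * A j3)) = (\<Sum>(j1, j2, j3) \<in> Trip k. cc j1 * cc j2 * cc j3)"
    unfolding sum_distrib_left sum_negf[symmetric]
  proof (intro sum.cong refl)
    fix x assume "x \<in> Trip k"
    then obtain j1 j2 j3 where x: "x = (j1, j2, j3)" "j1 + j2 + j3 = k + 1" unfolding Trip_def by auto
    then have s: "sg j1 * sg j2 * sg j3 = - sg k" by (simp add: sg_mult sg_Suc)
    have "cc j1 * cc j2 * cc j3 = (sg j1 * sg j2 * sg j3) * (A j1 * A j2 * A j3)"
      by (simp add: cc_def algebra_simps)
    then show "- (sg k * (case x of (j1, j2, j3) \<Rightarrow> A j1 * A j2 * A j3)) =
         (case x of (j1, j2, j3) \<Rightarrow> cc j1 * cc j2 * cc j3)" by (simp add: s x)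
  qed
  show ?thesis unfolding W_def 1[symmetric] 2[symmetric] 3[symmetric] 4[symmetric]
    by (simp add: algebra_simps)
qed

lemma cc_Suc: "cc (Suc k) = (1 + A0) * inverse (1 - 2 * A0) * W k"
proof -
  have d0: "(2 * A0 - 1) $ 0 \<noteq> 0" using A0_prop by (simp add: numeral_mult_nth)
  have i: "inverse (2 * A0 - 1) = - inverse (1 - 2 * A0)"
    by (metis fps_inverse_minus minus_diff_eq)
  have hA: "A (Suc k) = (1 + A0) * inverse (2 * A0 - 1) * ( E (E (A k))
     + (\<Sum>i\<le>k. A i * E (E (A (k - i))) - E (A i) * E (A (k - i)))
     - 3 * fps_X * (\<Sum>i\<in>{1..k}. A i * A (k + 1 - i))
     - fps_X * (\<Sum>(j1, j2, j3) \<in> Trip k. A j1 * A j2 * A j3))"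
    unfolding A_Suc A_step_def Trip_def fps_divide_unit[OF d0] ..
  have "cc (Suc k) = (1 + A0) * inverse (1 - 2 * A0) * (sg k * ( E (E (A k))
     + (\<Sum>i\<le>k. A i * E (E (A (k - i))) - E (A i) * E (A (k - i)))
     - 3 * fps_X * (\<Sum>i\<in>{1..k}. A i * A (k + 1 - i))
     - fps_X * (\<Sum>(j1, j2, j3) \<in> Trip k. A j1 * A j2 * A j3)))"
    unfolding cc_def sg_Suc hA i by (simp add: algebra_simps)
  then show ?thesis unfolding sgT .
qed

lemma MM_half: "MM (f + f) \<Longrightarrow> MM f"
proof -
  assume "MM (f + f)"
  then have "0 \<le> ((1 - fps_X) * (f + f)) $ n" for n unfolding MM_def nn_def by blast
  then have "0 \<le> ((1 - fps_X) * f) $ n" for n unfolding distrib_left fps_add_nth by (metis add_nonneg_nonneg linorder_not_le add_neg_neg)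
  then show ?thesis unfolding MM_def nn_def by blast
qed

lemma W2_sym: "(\<Sum>i\<le>k. BB (cc i) (cc (k - i))) =
   (\<Sum>i\<le>k. cc i * E (E (cc (k - i))) - E (cc i) * E (cc (k - i)))
 + (\<Sum>i\<le>k. cc i * E (E (cc (k - i))) - E (cc i) * E (cc (k - i)))"
proof -
  have r: "(\<Sum>i\<le>k. E (E (cc i)) * cc (k - i)) = (\<Sum>i\<le>k. cc i * E (E (cc (k - i))))"
  proof -
    have "(\<Sum>i<Suc k. E (E (cc i)) * cc (k - i)) = (\<Sum>i<Suc k. E (E (cc (Suc k - Suc i))) * cc (k - (Suc k - Suc i)))"
      by (rule sum.nat_diff_reindex[symmetric])
    also have "\<dots> = (\<Sum>i<Suc k. cc i * E (E (cc (k - i))))"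
      by (intro sum.cong refl) (auto simp: mult.commute)
    finally show ?thesis by (simp add: lessThan_Suc_atMost)
  qed
  show ?thesis unfolding BB_def sum.distrib sum_subtractf r by (simp add: algebra_simps)
qed

lemma MM_cc: "\<forall>j\<le>k. MM (cc j)"
proof (induction k)
  case 0
  have "cc 0 = A0" by (simp add: cc_def sg_def A_def)
  then show ?case using MM_A0 by simp
next
  case (Suc k)
  have IH: "MM (cc j)" if "j \<le> k" for j using Suc that by blast
  have nnc: "nn (cc j)" if "j \<le> k" for j using MM_nn IH that by blast
  have w1: "MM (E (E (cc k)))" by (intro MM_EE IH) simp
  have w2: "MM (\<Sum>i\<le>k. cc i * E (E (cc (k - i))) - E (cc i) * E (cc (k - i)))"
    by (rule MM_half, unfold W2_sym[symmetric]) (auto intro!: MM_sum MM_BB IH)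
  have w3: "MM (3 * fps_X * (\<Sum>i\<in>{1..k}. cc i * cc (k + 1 - i)))"
    by (intro MM_mult' MM_sum MM_mult nn_mult nn_numeral nn_X IH nnc) auto
  have w4: "MM (fps_X * (\<Sum>(j1, j2, j3) \<in> Trip k. cc j1 * cc j2 * cc j3))"
  proof (intro MM_mult' MM_sum nn_X)
    fix x assume "x \<in> Trip k"
    then obtain j1 j2 j3 where x: "x = (j1, j2, j3)" "j1 \<le> k" "j2 \<le> k" "j3 \<le> k"
      unfolding Trip_def by auto
    show "MM (case x of (j1, j2, j3) \<Rightarrow> cc j1 * cc j2 * cc j3)"
      using x by (auto intro!: MM_mult IH nnc)
  qed
  have "MM (cc (Suc k))" unfolding cc_Suc W_def
    by (intro MM_mult' nn_pref MM_add w1 w2 w3 w4)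
  then show ?case using Suc le_Suc_eq by auto
qed

theorem proposition4:
  shows "\<forall>k n. 1 \<le> n \<longrightarrow> Acoeff k n \<le> Acoeff k (Suc n)"
proof (intro allI impI)
  fix k n :: nat
  have "Acoeff k m = cc k $ m" for m by (simp add: Acoeff_def cc_def sg_def)
  then show "Acoeff k n \<le> Acoeff k (Suc n)" using MM_mono MM_cc by (metis order_refl)
qed
end
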